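(* Let $d\ge 3$, $\lambda>0$ with $\log d\lesssim\lambda\lesssim d$, $\rho_0=\log^{-c_0}d$ for a constant $c_0>0$, $\mu=\rho_0/(d+\lambda)$, and let $(a,b,c)$ solve \[ \dot a=a(24-16a-8r),\quad \dot b=8(1+\lambda)(1-r)b-16(1+\lambda)^2b^2,\quad \dot c=8(1-r)c-16c^2, \] with $r=a+(1+\lambda)b+(d-2)c$ and $a(0)=b(0)=c(0)=\mu$. Let $B=(1+\lambda)b$, $C=(d-2)c$, fix $\rho\in(0,1/12)$ and let $T_{1a}=\inf\{t\ge0: r(t)\ge\rho\}$. Then, for $d$ large enough: (1) For all $t\in[0,T_{1a}]$, $r(t)\le\rho$ and \[ a(0)e^{24(1-\rho)t}\le a(t)\le a(0)e^{24t},\quad b(0)e^{8(1+\lambda)(1-3\rho)t}\le b(t)\le b(0)e^{8(1+\lambda)t}, \] \[ c(0)e^{(8(1-\rho)-16\rho/(d-2))t}\le c(t)\le c(0)e^{8t}. \] (2) $T_{1a}=O(\lambda^{-1}\log d)$. (3) $a(T_{1a})=O(\rho_0/d)$, $C(T_{1a})=O(\rho_0)$, and $B(T_{1a})=\rho-a(T_{1a})-C(T_{1a})=\rho(1+o(1))$.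
   Context: This ODE is the population gradient flow of the phase-retrieval model $y=(x^\top w_\star)^2+\nu$, $x\sim\mathcal N(0,I_d+\lambda vv^\top)$ ($v\perp w_\star$ unit vectors), with network $f_W(x)=\sum_{j=1}^d(w_j^\top x)^2$, in the coordinates $WW^\top=a\,w_\star w_\star^\top+b\,vv^\top+c(I-w_\star w_\star^\top-vv^\top)$, started from $WW^\top=\mu I_d$. Asymptotic notation refers to $d\to\infty$. *)

theory Defs
  imports "HOL-Analysis.Analysis"
begin

definition rfun :: "nat \<Rightarrow> real \<Rightarrow> (real \<Rightarrow> real) \<Rightarrow> (real \<Rightarrow> real) \<Rightarrow> (real \<Rightarrow> real) \<Rightarrow> real \<Rightarrow> real" where
  "rfun d lam a b c t = a t + (1 + lam) * b t + (real d - 2) * c t"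

definition is_flow :: "nat \<Rightarrow> real \<Rightarrow> real \<Rightarrow> (real \<Rightarrow> real) \<Rightarrow> (real \<Rightarrow> real) \<Rightarrow> (real \<Rightarrow> real) \<Rightarrow> bool" where
  "is_flow d lam mu a b c \<longleftrightarrow>
     a 0 = mu \<and> b 0 = mu \<and> c 0 = mu \<and>
     (\<forall>t\<ge>0.
        (a has_real_derivative a t * (24 - 16 * a t - 8 * rfun d lam a b c t)) (at t within {0..}) \<and>
        (b has_real_derivative 8 * (1 + lam) * (1 - rfun d lam a b c t) * b t - 16 * (1 + lam)^2 * (b t)^2) (at t within {0..}) \<and>
        (c has_real_derivative 8 * (1 - rfun d lam a b c t) * c t - 16 * (c t)^2) (at t within {0..}))"

end

theory Submission
  imports Defs
begin

lemma expsol: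
  fixes f g :: "real \<Rightarrow> real"
  assumes d: "\<And>t. t \<ge> 0 \<Longrightarrow> (f has_real_derivative f t * g t) (at t within {0..})"
    and gc: "continuous_on {0..} g" and t: "t \<ge> 0"
  shows "f t = f 0 * exp (integral {0..t} g)"
proof -
  have gc': "continuous_on {0..t} g" using gc by (rule continuous_on_subset) auto
  have "\<And>s. s \<in> {0..t} \<Longrightarrow> ((\<lambda>s. f s * exp (- integral {0..s} g)) has_real_derivative 0) (at s within {0..t})"
  proof -
    fix s assume s: "s \<in> {0..t}"
    have fd: "(f has_real_derivative f s * g s) (at s within {0..t})"
      using d[of s] s by (auto intro: DERIV_subset)
    have Gd: "((\<lambda>x. integral {0..x} g) has_real_derivative g s) (at s within {0..t})"
      by (rule integral_has_real_derivative[OF gc' s])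
    have e: "((\<lambda>s. exp (- integral {0..s} g)) has_real_derivative exp (- integral {0..s} g) * (- g s)) (at s within {0..t})"
      using DERIV_chain2[OF DERIV_exp DERIV_minus[OF Gd]] .
    from DERIV_mult[OF fd e]
    show "((\<lambda>s. f s * exp (- integral {0..s} g)) has_real_derivative 0) (at s within {0..t})"
      by (simp add: algebra_simps)
  qed
  moreover have cv: "convex {0..t}" by (simp add: convex_real_interval)
  ultimately obtain k where k: "\<forall>x\<in>{0..t}. f x * exp (- integral {0..x} g) = k"
    using has_field_derivative_zero_constant[OF cv] by blast
  have "f t * exp (- integral {0..t} g) = f 0 * exp (- integral {0..0} g)"
    using k t bspec[OF k, of 0] bspec[OF k, of t] by simp
  then have "f t * exp (- integral {0..t} g) = f 0" by simp
  then show ?thesis by (metis exp_minus_inverse mult.assoc mult.right_neutral)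
qed

lemma integral_bound_le:
  fixes g :: "real \<Rightarrow> real"
  assumes gc: "continuous_on {0..t} g" and t: "t \<ge> 0" and le: "\<And>s. s \<in> {0..t} \<Longrightarrow> g s \<le> k"
  shows "integral {0..t} g \<le> k * t"
proof -
  have "integral {0..t} g \<le> integral {0..t} (\<lambda>_. k)"
    by (rule integral_le) (auto intro: integrable_continuous_real gc le)
  then show ?thesis using t by (simp add: mult.commute)
qed

lemma integral_bound_ge:
  fixes g :: "real \<Rightarrow> real"
  assumes gc: "continuous_on {0..t} g" and t: "t \<ge> 0" and le: "\<And>s. s \<in> {0..t} \<Longrightarrow> k \<le> g s"
  shows "k * t \<le> integral {0..t} g"
proof -
  have "integral {0..t} (\<lambda>_. k) \<le> integral {0..t} g"
    by (rule integral_le) (auto intro: integrable_continuous_real gc le)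
  then show ?thesis using t by (simp add: mult.commute)
qed


lemma flow_facts:
  fixes a b c :: "real \<Rightarrow> real"
  assumes F: "is_flow d lam mu a b c" and mu: "mu > 0" and d: "real d \<ge> 3" and lam: "lam > 0"
  shows flow_pos: "\<And>t. t \<ge> 0 \<Longrightarrow> a t > 0 \<and> b t > 0 \<and> c t > 0"
    and flow_rcont: "continuous_on {0..} (rfun d lam a b c)"
    and flow_bounds: "\<And>t \<rho>. t \<ge> 0 \<Longrightarrow> (\<forall>s\<in>{0..t}. rfun d lam a b c s \<le> \<rho>) \<Longrightarrow>
           a 0 * exp (24 * (1 - \<rho>) * t) \<le> a t \<and> a t \<le> a 0 * exp (24 * t) \<and>
           b 0 * exp (8 * (1 + lam) * (1 - 3 * \<rho>) * t) \<le> b t \<and> b t \<le> b 0 * exp (8 * (1 + lam) * t) \<and>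
           c 0 * exp ((8 * (1 - \<rho>) - 16 * \<rho> / (real d - 2)) * t) \<le> c t \<and> c t \<le> c 0 * exp (8 * t)"
proof -
  define r where "r = rfun d lam a b c"
  define ga where "ga = (\<lambda>t. 24 - 16 * a t - 8 * r t)"
  define gb where "gb = (\<lambda>t. 8 * (1 + lam) * (1 - r t) - 16 * (1 + lam)^2 * b t)"
  define gc where "gc = (\<lambda>t. 8 * (1 - r t) - 16 * c t)"
  have a0: "a 0 = mu" and b0: "b 0 = mu" and c0: "c 0 = mu" using F unfolding is_flow_def by auto
  have da: "\<And>t. t \<ge> 0 \<Longrightarrow> (a has_real_derivative a t * ga t) (at t within {0..})"
    using F unfolding is_flow_def ga_def r_def by auto
  have db: "(b has_real_derivative b t * gb t) (at t within {0..})" if t: "t \<ge> 0" for t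
  proof -
    have e: "8 * (1 + lam) * (1 - r t) * b t - 16 * (1 + lam)^2 * (b t)^2 = b t * gb t"
      unfolding gb_def by (simp add: algebra_simps power2_eq_square)
    have der: "(b has_real_derivative 8 * (1 + lam) * (1 - r t) * b t - 16 * (1 + lam)^2 * (b t)^2) (at t within {0..})"
      using F t unfolding is_flow_def r_def[symmetric] by blast
    show ?thesis by (subst e[symmetric]) (rule der)
  qed
  have dc: "(c has_real_derivative c t * gc t) (at t within {0..})" if t: "t \<ge> 0" for t
  proof -
    have e: "8 * (1 - r t) * c t - 16 * (c t)^2 = c t * gc t"
      unfolding gc_def by (simp add: algebra_simps power2_eq_square)
    have der: "(c has_real_derivative 8 * (1 - r t) * c t - 16 * (c t)^2) (at t within {0..})"
      using F t unfolding is_flow_def r_def[symmetric] by blast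
    show ?thesis by (subst e[symmetric]) (rule der)
  qed
  have ca: "continuous_on {0..} a" by (rule DERIV_continuous_on[OF da]) auto
  have cb: "continuous_on {0..} b" by (rule DERIV_continuous_on[OF db]) auto
  have cc: "continuous_on {0..} c" by (rule DERIV_continuous_on[OF dc]) auto
  have cr: "continuous_on {0..} r" unfolding r_def rfun_def
    by (intro continuous_intros ca cb cc)
  then show "continuous_on {0..} (rfun d lam a b c)" by (simp add: r_def)
  have cga: "continuous_on {0..} ga" unfolding ga_def by (intro continuous_intros ca cr)
  have cgb: "continuous_on {0..} gb" unfolding gb_def by (intro continuous_intros cb cr)
  have cgc: "continuous_on {0..} gc" unfolding gc_def by (intro continuous_intros cc cr)
  have ea: "\<And>t. t \<ge> 0 \<Longrightarrow> a t = a 0 * exp (integral {0..t} ga)" by (rule expsol[OF da cga])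
  have eb: "\<And>t. t \<ge> 0 \<Longrightarrow> b t = b 0 * exp (integral {0..t} gb)" by (rule expsol[OF db cgb])
  have ec: "\<And>t. t \<ge> 0 \<Longrightarrow> c t = c 0 * exp (integral {0..t} gc)" by (rule expsol[OF dc cgc])
  show pos: "\<And>t. t \<ge> 0 \<Longrightarrow> a t > 0 \<and> b t > 0 \<and> c t > 0"
  proof -
    fix t :: real assume "t \<ge> 0"
    then show "a t > 0 \<and> b t > 0 \<and> c t > 0" using ea eb ec a0 b0 c0 mu by simp
  qed
  fix t \<rho> :: real assume t: "t \<ge> 0" and rb: "\<forall>s\<in>{0..t}. rfun d lam a b c s \<le> \<rho>"
  have sub: "{0..t} \<subseteq> {0..}" by auto
  have dpos: "real d - 2 > 0" using d by simp
  have key: "a s \<le> \<rho> \<and> (1 + lam) * b s \<le> \<rho> \<and> (real d - 2) * c s \<le> \<rho> \<and> r s \<le> \<rho> \<and> r s \<ge> 0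
             \<and> a s \<ge> 0 \<and> b s \<ge> 0 \<and> c s \<ge> 0" if s: "s \<in> {0..t}" for s
  proof -
    have p: "a s > 0" "b s > 0" "c s > 0" using pos[of s] s by auto
    have rs: "r s \<le> \<rho>" using rb s r_def by auto
    have "(1 + lam) * b s > 0" using p lam by simp
    moreover have "(real d - 2) * c s > 0" using p dpos by simp
    moreover have "r s = a s + (1 + lam) * b s + (real d - 2) * c s" unfolding r_def rfun_def ..
    ultimately show ?thesis using p rs by linarith
  qed
  have la: "24 * (1 - \<rho>) \<le> ga s \<and> ga s \<le> 24" if s: "s \<in> {0..t}" for s
    using key[OF s] unfolding ga_def by (auto simp: algebra_simps)
  have lb: "8 * (1 + lam) * (1 - 3 * \<rho>) \<le> gb s \<and> gb s \<le> 8 * (1 + lam)" if s: "s \<in> {0..t}" for s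
  proof -
    have k: "(1 + lam) * b s \<le> \<rho>" "r s \<le> \<rho>" "r s \<ge> 0" "b s \<ge> 0" using key[OF s] by auto
    have l1: "0 \<le> 1 + lam" using lam by simp
    have "16 * (1 + lam)^2 * b s = 16 * (1 + lam) * ((1 + lam) * b s)" by (simp add: power2_eq_square)
    also have "\<dots> \<le> 16 * (1 + lam) * \<rho>" using k l1 by (intro mult_left_mono) auto
    finally have A: "16 * (1 + lam)^2 * b s \<le> 16 * (1 + lam) * \<rho>" .
    have B: "8 * (1 + lam) * (1 - r s) \<ge> 8 * (1 + lam) * (1 - \<rho>)" using k l1 by (intro mult_left_mono) auto
    have C: "8 * (1 + lam) * (1 - r s) \<le> 8 * (1 + lam)" using k l1 by (simp add: mult_left_le)
    have D: "16 * (1 + lam)^2 * b s \<ge> 0" using k by simp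
    show ?thesis unfolding gb_def using A B C D by (simp add: algebra_simps)
  qed
  have lc: "8 * (1 - \<rho>) - 16 * \<rho> / (real d - 2) \<le> gc s \<and> gc s \<le> 8" if s: "s \<in> {0..t}" for s
  proof -
    have k: "(real d - 2) * c s \<le> \<rho>" "r s \<le> \<rho>" "r s \<ge> 0" "c s \<ge> 0" using key[OF s] by auto
    have "c s \<le> \<rho> / (real d - 2)" using k dpos by (simp add: pos_le_divide_eq mult.commute)
    then show ?thesis unfolding gc_def using k by simp
  qed
  have ia: "24 * (1 - \<rho>) * t \<le> integral {0..t} ga \<and> integral {0..t} ga \<le> 24 * t"
    using integral_bound_le[OF continuous_on_subset[OF cga sub] t] integral_bound_ge[OF continuous_on_subset[OF cga sub] t] la by blast
  have ib: "8 * (1 + lam) * (1 - 3 * \<rho>) * t \<le> integral {0..t} gb \<and> integral {0..t} gb \<le> 8 * (1 + lam) * t"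
    using integral_bound_le[OF continuous_on_subset[OF cgb sub] t] integral_bound_ge[OF continuous_on_subset[OF cgb sub] t] lb by blast
  have ic: "(8 * (1 - \<rho>) - 16 * \<rho> / (real d - 2)) * t \<le> integral {0..t} gc \<and> integral {0..t} gc \<le> 8 * t"
    using integral_bound_le[OF continuous_on_subset[OF cgc sub] t] integral_bound_ge[OF continuous_on_subset[OF cgc sub] t] lc by blast
  have m0: "mu > 0" by (rule mu)
  show "a 0 * exp (24 * (1 - \<rho>) * t) \<le> a t \<and> a t \<le> a 0 * exp (24 * t) \<and>
           b 0 * exp (8 * (1 + lam) * (1 - 3 * \<rho>) * t) \<le> b t \<and> b t \<le> b 0 * exp (8 * (1 + lam) * t) \<and>
           c 0 * exp ((8 * (1 - \<rho>) - 16 * \<rho> / (real d - 2)) * t) \<le> c t \<and> c t \<le> c 0 * exp (8 * t)"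
    unfolding ea[OF t] eb[OF t] ec[OF t] a0 b0 c0 using ia ib ic m0 by auto
qed


lemma core:
  fixes a b c :: "real \<Rightarrow> real"
  assumes F: "is_flow d lam mu a b c" and mu: "mu > 0" and d: "real d \<ge> 3" and lam: "lam > 0"
    and r0: "rfun d lam a b c 0 < \<rho>" and rho: "\<rho> < 1/12"
  shows "{t. t \<ge> 0 \<and> rfun d lam a b c t \<ge> \<rho>} \<noteq> {}
    \<and> Inf {t. t \<ge> 0 \<and> rfun d lam a b c t \<ge> \<rho>} \<ge> 0
    \<and> rfun d lam a b c (Inf {t. t \<ge> 0 \<and> rfun d lam a b c t \<ge> \<rho>}) = \<rho>
    \<and> (\<forall>t\<in>{0..Inf {t. t \<ge> 0 \<and> rfun d lam a b c t \<ge> \<rho>}}. rfun d lam a b c t \<le> \<rho>)"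
proof -
  define r where "r = rfun d lam a b c"
  define S where "S = {t. t \<ge> 0 \<and> r t \<ge> \<rho>}"
  have pos: "\<And>t. t \<ge> 0 \<Longrightarrow> a t > 0 \<and> b t > 0 \<and> c t > 0" by (rule flow_pos[OF F mu d lam])
  have cr: "continuous_on {0..} r" unfolding r_def by (rule flow_rcont[OF F mu d lam])
  have dpos: "real d - 2 > 0" using d by simp
  have rdecomp: "r t = a t + (1 + lam) * b t + (real d - 2) * c t" for t unfolding r_def rfun_def ..
  have bB: "(1 + lam) * b t < r t" if "t \<ge> 0" for t
  proof -
    have "a t > 0" "(real d - 2) * c t > 0" using pos[OF that] dpos by auto
    then show ?thesis using rdecomp[of t] by linarith
  qed
  have rpos0: "r 0 > 0"
  proof -
    have "(1 + lam) * b 0 > 0" using pos[of 0] lam by simp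
    then show ?thesis using bB[of 0] by linarith
  qed
  have rho0: "\<rho> > 0" using r0 rpos0 r_def by simp
  have Sne: "S \<noteq> {}"
  proof
    assume "S = {}"
    then have lt: "\<forall>t\<ge>0. r t < \<rho>" unfolding S_def by auto
    define \<beta> where "\<beta> = 8 * (1 + lam) * (1 - 3 * \<rho>)"
    have bpos: "\<beta> > 0" unfolding \<beta>_def using lam rho by simp
    define t where "t = \<rho> / ((1 + lam) * mu * \<beta>)"
    have t0: "t \<ge> 0" unfolding t_def using rho0 lam mu bpos by simp
    have pr: "\<forall>s\<in>{0..t}. rfun d lam a b c s \<le> \<rho>" using lt unfolding r_def by (auto simp: less_imp_le)
    have "b 0 * exp (\<beta> * t) \<le> b t"
      using flow_bounds[OF F mu d lam t0 pr] unfolding \<beta>_def by blast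
    moreover have "b 0 = mu" using F unfolding is_flow_def by simp
    moreover have "1 + \<beta> * t \<le> exp (\<beta> * t)" by (rule exp_ge_add_one_self)
    ultimately have "mu * (1 + \<beta> * t) \<le> b t"
    proof -
      assume h: "b 0 * exp (\<beta> * t) \<le> b t" "b 0 = mu" "1 + \<beta> * t \<le> exp (\<beta> * t)"
      have "mu * (1 + \<beta> * t) \<le> mu * exp (\<beta> * t)" using mult_left_mono[OF h(3), of mu] mu by simp
      then show ?thesis using h(1,2) by simp
    qed
    then have "(1 + lam) * (mu * (1 + \<beta> * t)) \<le> (1 + lam) * b t" using lam by simp
    moreover have "(1 + lam) * (mu * (\<beta> * t)) = \<rho>" unfolding t_def using lam mu bpos by simp
    moreover have "(1 + lam) * mu > 0" using lam mu by simp
    ultimately have "(1 + lam) * b t > \<rho>" by (simp add: algebra_simps)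
    then show False using bB[OF t0] lt t0 by auto
  qed
  have cl: "closed S"
  proof -
    have "S = {0..} \<inter> r -` {\<rho>..}" unfolding S_def by auto
    then show ?thesis using continuous_closed_preimage[OF cr] by simp
  qed
  have bdd: "bdd_below S" unfolding S_def by (rule bdd_belowI[of _ 0]) auto
  define T where "T = Inf S"
  have TS: "T \<in> S" unfolding T_def by (rule closed_contains_Inf[OF Sne bdd cl])
  then have T0: "T \<ge> 0" and rT: "r T \<ge> \<rho>" unfolding S_def by auto
  have before: "r t < \<rho>" if "0 \<le> t" "t < T" for t
  proof (rule ccontr)
    assume "\<not> r t < \<rho>"
    then have "t \<in> S" unfolding S_def using that by auto
    then have "T \<le> t" unfolding T_def by (rule cInf_lower[OF _ bdd])
    then show False using that by simp
  qed
  have rTe: "r T = \<rho>"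
  proof (rule ccontr)
    assume "r T \<noteq> \<rho>"
    then have gt: "r T > \<rho>" using rT by simp
    have "continuous_on {0..T} r" using cr by (rule continuous_on_subset) auto
    then obtain x where x: "0 \<le> x" "x \<le> T" "r x = \<rho>"
      using IVT'[of r 0 \<rho> T] r0 gt T0 r_def by force
    then have "x < T" using gt by (cases "x = T") auto
    then show False using before[of x] x by simp
  qed
  have all: "\<forall>t\<in>{0..T}. r t \<le> \<rho>"
  proof
    fix t assume "t \<in> {0..T}"
    then show "r t \<le> \<rho>" using before[of t] rTe by (cases "t = T") auto
  qed
  show ?thesis using Sne T0 rTe all unfolding S_def T_def r_def by blast
qed

theorem propositionB3:
  fixes c0 \<rho> K1 K2 :: real
  assumes "c0 > 0" and "0 < \<rho>" and "\<rho> < 1/12" and "K1 > 0" and "K2 > 0"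
  shows "\<exists>M>0. \<forall>\<epsilon>>0. \<exists>D::nat. \<forall>d::nat. \<forall>lam::real. \<forall>a b c :: real \<Rightarrow> real.
    d \<ge> max 3 D \<longrightarrow> K1 * ln (real d) \<le> lam \<longrightarrow> lam \<le> K2 * real d \<longrightarrow>
    (let \<rho>0 = ln (real d) powr (- c0);
         \<mu> = \<rho>0 / (real d + lam);
         r = rfun d lam a b c;
         T = Inf {t. t \<ge> 0 \<and> r t \<ge> \<rho>};
         B = (\<lambda>t. (1 + lam) * b t);
         C = (\<lambda>t. (real d - 2) * c t)
     in is_flow d lam \<mu> a b c \<longrightarrow>
        {t. t \<ge> 0 \<and> r t \<ge> \<rho>} \<noteq> {} \<and>
        (\<forall>t\<in>{0..T}.
           r t \<le> \<rho> \<and>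
           a 0 * exp (24 * (1 - \<rho>) * t) \<le> a t \<and> a t \<le> a 0 * exp (24 * t) \<and>
           b 0 * exp (8 * (1 + lam) * (1 - 3 * \<rho>) * t) \<le> b t \<and> b t \<le> b 0 * exp (8 * (1 + lam) * t) \<and>
           c 0 * exp ((8 * (1 - \<rho>) - 16 * \<rho> / (real d - 2)) * t) \<le> c t \<and> c t \<le> c 0 * exp (8 * t)) \<and>
        T \<le> M * ln (real d) / lam \<and>
        \<bar>a T\<bar> \<le> M * \<rho>0 / real d \<and>
        \<bar>C T\<bar> \<le> M * \<rho>0 \<and>
        B T = \<rho> - a T - C T \<and>
        \<bar>B T - \<rho>\<bar> \<le> \<epsilon> * \<rho>)"
proof -
  define M0 where "M0 = (ln (1 + K2) + 1 + c0) / 6"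
  define \<tau> where "\<tau> = M0 / K1"
  define E where "E = exp (24 * \<tau>)"
  define M where "M = M0 + E"
  have lnK: "ln (1 + K2) > 0" using assms by simp
  have M0pos: "M0 > 0" unfolding M0_def using lnK assms(1) by (simp add: add_pos_pos)
  have Epos: "E > 0" unfolding E_def by simp
  have Mpos: "M > 0" unfolding M_def using M0pos Epos by simp
  show ?thesis
  proof (intro exI[of _ M] conjI allI impI Mpos)
    fix \<epsilon> :: real assume eps: "\<epsilon> > 0"
    define \<delta> where "\<delta> = min (\<epsilon> * \<rho> / (2 * E)) (\<rho> / 2)"
    have dpos: "\<delta> > 0" unfolding \<delta>_def using eps assms Epos by simp
    define X where "X = max 1 (\<delta> powr (-1 / c0))"
    define D where "D = nat (ceiling (exp X))"
    show "\<exists>D::nat. \<forall>d::nat. \<forall>lam::real. \<forall>a b c :: real \<Rightarrow> real.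
    d \<ge> max 3 D \<longrightarrow> K1 * ln (real d) \<le> lam \<longrightarrow> lam \<le> K2 * real d \<longrightarrow>
    (let \<rho>0 = ln (real d) powr (- c0);
         \<mu> = \<rho>0 / (real d + lam);
         r = rfun d lam a b c;
         T = Inf {t. t \<ge> 0 \<and> r t \<ge> \<rho>};
         B = (\<lambda>t. (1 + lam) * b t);
         C = (\<lambda>t. (real d - 2) * c t)
     in is_flow d lam \<mu> a b c \<longrightarrow>
        {t. t \<ge> 0 \<and> r t \<ge> \<rho>} \<noteq> {} \<and>
        (\<forall>t\<in>{0..T}.
           r t \<le> \<rho> \<and>
           a 0 * exp (24 * (1 - \<rho>) * t) \<le> a t \<and> a t \<le> a 0 * exp (24 * t) \<and>
           b 0 * exp (8 * (1 + lam) * (1 - 3 * \<rho>) * t) \<le> b t \<and> b t \<le> b 0 * exp (8 * (1 + lam) * t) \<and>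
           c 0 * exp ((8 * (1 - \<rho>) - 16 * \<rho> / (real d - 2)) * t) \<le> c t \<and> c t \<le> c 0 * exp (8 * t)) \<and>
        T \<le> M * ln (real d) / lam \<and>
        \<bar>a T\<bar> \<le> M * \<rho>0 / real d \<and>
        \<bar>C T\<bar> \<le> M * \<rho>0 \<and>
        B T = \<rho> - a T - C T \<and>
        \<bar>B T - \<rho>\<bar> \<le> \<epsilon> * \<rho>)"
    proof (intro exI[of _ D] allI impI)
      fix d :: nat and lam :: real and a b c :: "real \<Rightarrow> real"
      assume dD: "max 3 D \<le> d" and l1: "K1 * ln (real d) \<le> lam" and l2: "lam \<le> K2 * real d"
      define L where "L = ln (real d)"
      define \<rho>0 where "\<rho>0 = L powr (- c0)"
      define \<mu> where "\<mu> = \<rho>0 / (real d + lam)"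
      define r where "r = rfun d lam a b c"
      define T where "T = Inf {t. t \<ge> 0 \<and> r t \<ge> \<rho>}"
      have d3: "real d \<ge> 3" using dD by simp
      have dX: "real d \<ge> exp X" using dD unfolding D_def by linarith
      have LX: "L \<ge> X" unfolding L_def using dX by (metis exp_gt_zero ln_exp ln_le_cancel_iff order_less_le_trans)
      have L1: "L \<ge> 1" using LX unfolding X_def by simp
      have lampos: "lam > 0"
      proof -
        have "K1 * L > 0" using L1 assms(4) by simp
        then show ?thesis using l1 unfolding L_def by linarith
      qed
      have \<rho>0pos: "\<rho>0 > 0" unfolding \<rho>0_def using L1 by simp
      have "\<rho>0 \<le> X powr (- c0)" unfolding \<rho>0_def
        by (rule powr_mono2') (use assms L1 LX X_def in auto)
      also have "\<dots> \<le> (\<delta> powr (-1 / c0)) powr (- c0)"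
        by (rule powr_mono2') (use assms dpos X_def in auto)
      also have "\<dots> = \<delta>" using assms dpos by (simp add: powr_powr)
      finally have \<rho>0d: "\<rho>0 \<le> \<delta>" .
      have mupos: "\<mu> > 0" unfolding \<mu>_def using \<rho>0pos lampos by simp
      show "let \<rho>0 = ln (real d) powr (- c0);
         \<mu> = \<rho>0 / (real d + lam);
         r = rfun d lam a b c;
         T = Inf {t. t \<ge> 0 \<and> r t \<ge> \<rho>};
         B = (\<lambda>t. (1 + lam) * b t);
         C = (\<lambda>t. (real d - 2) * c t)
     in is_flow d lam \<mu> a b c \<longrightarrow>
        {t. t \<ge> 0 \<and> r t \<ge> \<rho>} \<noteq> {} \<and>
        (\<forall>t\<in>{0..T}.
           r t \<le> \<rho> \<and>
           a 0 * exp (24 * (1 - \<rho>) * t) \<le> a t \<and> a t \<le> a 0 * exp (24 * t) \<and>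
           b 0 * exp (8 * (1 + lam) * (1 - 3 * \<rho>) * t) \<le> b t \<and> b t \<le> b 0 * exp (8 * (1 + lam) * t) \<and>
           c 0 * exp ((8 * (1 - \<rho>) - 16 * \<rho> / (real d - 2)) * t) \<le> c t \<and> c t \<le> c 0 * exp (8 * t)) \<and>
        T \<le> M * ln (real d) / lam \<and>
        \<bar>a T\<bar> \<le> M * \<rho>0 / real d \<and>
        \<bar>C T\<bar> \<le> M * \<rho>0 \<and>
        B T = \<rho> - a T - C T \<and>
        \<bar>B T - \<rho>\<bar> \<le> \<epsilon> * \<rho>"
        unfolding Let_def L_def[symmetric] \<rho>0_def[symmetric] \<mu>_def[symmetric] r_def[symmetric] T_def[symmetric]
      proof (intro impI)
        assume F: "is_flow d lam \<mu> a b c"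
        have a0: "a 0 = \<mu>" and b0: "b 0 = \<mu>" and c0': "c 0 = \<mu>" using F unfolding is_flow_def by auto
        have "r 0 = \<mu> * (real d + lam)" unfolding r_def rfun_def a0 b0 c0' by (simp add: algebra_simps)
        also have "\<dots> = \<rho>0" unfolding \<mu>_def using lampos by simp
        finally have r0: "r 0 = \<rho>0" .
        have r0lt: "rfun d lam a b c 0 < \<rho>" using r0 \<rho>0d unfolding r_def \<delta>_def using assms by simp
        note C = core[OF F mupos d3 lampos r0lt assms(3)]
        have Sne: "{t. t \<ge> 0 \<and> r t \<ge> \<rho>} \<noteq> {}" using C unfolding r_def by blast
        have T0: "T \<ge> 0" using C unfolding r_def T_def by blast
        have rT: "r T = \<rho>" using C unfolding r_def T_def by blast
        have rle: "\<forall>t\<in>{0..T}. r t \<le> \<rho>" using C unfolding r_def T_def by blast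
        have bnds: "\<forall>t\<in>{0..T}.
           r t \<le> \<rho> \<and>
           a 0 * exp (24 * (1 - \<rho>) * t) \<le> a t \<and> a t \<le> a 0 * exp (24 * t) \<and>
           b 0 * exp (8 * (1 + lam) * (1 - 3 * \<rho>) * t) \<le> b t \<and> b t \<le> b 0 * exp (8 * (1 + lam) * t) \<and>
           c 0 * exp ((8 * (1 - \<rho>) - 16 * \<rho> / (real d - 2)) * t) \<le> c t \<and> c t \<le> c 0 * exp (8 * t)"
        proof
          fix t assume t: "t \<in> {0..T}"
          have pr: "\<forall>s\<in>{0..t}. rfun d lam a b c s \<le> \<rho>" using rle t unfolding r_def by auto
          show "r t \<le> \<rho> \<and>
           a 0 * exp (24 * (1 - \<rho>) * t) \<le> a t \<and> a t \<le> a 0 * exp (24 * t) \<and>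
           b 0 * exp (8 * (1 + lam) * (1 - 3 * \<rho>) * t) \<le> b t \<and> b t \<le> b 0 * exp (8 * (1 + lam) * t) \<and>
           c 0 * exp ((8 * (1 - \<rho>) - 16 * \<rho> / (real d - 2)) * t) \<le> c t \<and> c t \<le> c 0 * exp (8 * t)"
            using flow_bounds[OF F mupos d3 lampos _ pr] rle t by auto
        qed
        have TT: "T \<in> {0..T}" using T0 by simp
        have pos: "a T > 0" "b T > 0" "c T > 0" using flow_pos[OF F mupos d3 lampos T0] by auto
        have dm2: "real d - 2 > 0" using d3 by simp
        have rdec: "a T + (1 + lam) * b T + (real d - 2) * c T = \<rho>" using rT unfolding r_def rfun_def .
        define \<beta> where "\<beta> = 8 * (1 + lam) * (1 - 3 * \<rho>)"
        have bl: "\<mu> * exp (\<beta> * T) \<le> b T" using bnds TT b0 unfolding \<beta>_def by auto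
        have cpos: "(real d - 2) * c T > 0" using pos dm2 by simp
        have "(1 + lam) * b T < 1" using rdec pos cpos assms(3) by linarith
        moreover have "b T \<le> (1 + lam) * b T" using pos lampos by (simp add: algebra_simps)
        ultimately have "b T < 1" by linarith
        then have "\<mu> * exp (\<beta> * T) < 1" using bl by simp
        then have "exp (\<beta> * T) < 1 / \<mu>" using mupos by (simp add: field_simps)
        also have "1 / \<mu> = (real d + lam) / \<rho>0" unfolding \<mu>_def by simp
        finally have "\<beta> * T < ln ((real d + lam) / \<rho>0)"
          using \<rho>0pos lampos by (metis exp_gt_zero exp_less_cancel_iff exp_ln order_less_trans)
        also have "ln ((real d + lam) / \<rho>0) = ln (real d + lam) + c0 * ln L"
          using \<rho>0pos lampos L1 unfolding \<rho>0_def by (simp add: ln_div ln_powr)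
        also have "ln (real d + lam) \<le> ln (1 + K2) + L"
        proof -
          have "real d + lam \<le> (1 + K2) * real d" using l2 by (simp add: algebra_simps)
          then have "ln (real d + lam) \<le> ln ((1 + K2) * real d)" using lampos d3 by simp
          also have "\<dots> = ln (1 + K2) + L" unfolding L_def using assms d3 by (simp add: ln_mult)
          finally show ?thesis .
        qed
        also have "ln L \<le> L" using L1 ln_le_minus_one[of L] by simp
        then have "c0 * ln L \<le> c0 * L" using assms by simp
        finally have bT: "\<beta> * T < ln (1 + K2) + L + c0 * L" by simp
        have "ln (1 + K2) \<le> ln (1 + K2) * L" using lnK L1 by simp
        then have bT2: "\<beta> * T \<le> 6 * M0 * L" using bT unfolding M0_def by (simp add: algebra_simps)
        have "6 * lam * T \<le> \<beta> * T"
        proof -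
          have q: "1 - 3 * \<rho> \<ge> 3 / 4" using assms by simp
          have "8 * (1 + lam) * (3 / 4) \<le> 8 * (1 + lam) * (1 - 3 * \<rho>)"
            by (rule mult_left_mono[OF q]) (use lampos in simp)
          then have "6 * lam \<le> \<beta>" unfolding \<beta>_def by simp
          then show ?thesis using T0 by (simp add: mult_right_mono)
        qed
        then have "6 * lam * T \<le> 6 * M0 * L" using bT2 by simp
        then have TM0: "T \<le> M0 * L / lam" using lampos by (simp add: field_simps)
        have "M0 * L / lam \<le> M * L / lam" unfolding M_def using Epos L1 lampos by (simp add: divide_right_mono)
        then have Tb: "T \<le> M * L / lam" using TM0 by simp
        have "L / lam \<le> 1 / K1" using l1 assms(4) lampos L1 unfolding L_def by (simp add: field_simps)
        then have "M0 * L / lam \<le> M0 / K1" using M0pos by (metis mult_left_mono less_imp_le times_divide_eq_right mult.right_neutral)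
        then have Ttau: "T \<le> \<tau>" unfolding \<tau>_def using TM0 by simp
        have e24: "exp (24 * T) \<le> E" unfolding E_def using Ttau by simp
        have e8: "exp (8 * T) \<le> E" unfolding E_def using Ttau T0 by simp
        have mud: "\<mu> \<le> \<rho>0 / real d" unfolding \<mu>_def using \<rho>0pos lampos d3 by (simp add: frac_le)
        have aT: "a T \<le> \<mu> * E"
        proof -
          have "a T \<le> a 0 * exp (24 * T)" using bnds TT by blast
          also have "\<dots> \<le> \<mu> * E" unfolding a0 using mult_left_mono[OF e24, of \<mu>] mupos by simp
          finally show ?thesis .
        qed
        have aT2: "a T \<le> E * \<rho>0 / real d"
        proof -
          have "\<mu> * E \<le> \<rho>0 / real d * E" using mult_right_mono[OF mud, of E] Epos by simp
          then show ?thesis using aT by (simp add: mult.commute)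
        qed
        have aM: "\<bar>a T\<bar> \<le> M * \<rho>0 / real d"
        proof -
          have "E * \<rho>0 / real d \<le> M * \<rho>0 / real d" unfolding M_def using M0pos \<rho>0pos d3
            by (simp add: divide_right_mono)
          then show ?thesis using aT2 pos by simp
        qed
        have cT: "c T \<le> \<mu> * E"
        proof -
          have "c T \<le> c 0 * exp (8 * T)" using bnds TT by blast
          also have "\<dots> \<le> \<mu> * E" unfolding c0' using mult_left_mono[OF e8, of \<mu>] mupos by simp
          finally show ?thesis .
        qed
        have "(real d - 2) * \<mu> \<le> \<rho>0" unfolding \<mu>_def using \<rho>0pos lampos d3 by (simp add: field_simps)
        then have dmu: "((real d - 2) * \<mu>) * E \<le> \<rho>0 * E" using Epos by (simp add: mult_right_mono)
        have "(real d - 2) * c T \<le> (real d - 2) * (\<mu> * E)" using mult_left_mono[OF cT] dm2 by simp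
        then have CT: "(real d - 2) * c T \<le> E * \<rho>0" using dmu by (simp add: algebra_simps)
        have CM: "\<bar>(real d - 2) * c T\<bar> \<le> M * \<rho>0"
        proof -
          have "E * \<rho>0 \<le> M * \<rho>0" unfolding M_def using M0pos \<rho>0pos by simp
          then show ?thesis using CT pos dm2 by simp
        qed
        have BE: "(1 + lam) * b T = \<rho> - a T - (real d - 2) * c T" using rdec by simp
        have "\<bar>(1 + lam) * b T - \<rho>\<bar> = a T + (real d - 2) * c T" using BE pos(1) cpos by simp
        also have "\<dots> \<le> E * \<rho>0 + E * \<rho>0"
        proof -
          have "E * \<rho>0 / real d \<le> E * \<rho>0" using Epos \<rho>0pos d3 by (simp add: field_simps)
          then show ?thesis using aT2 CT by simp
        qed
        also have "\<dots> \<le> 2 * E * \<delta>" using \<rho>0d Epos by simp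
        also have "\<dots> \<le> \<epsilon> * \<rho>"
        proof -
          have "\<delta> \<le> \<epsilon> * \<rho> / (2 * E)" unfolding \<delta>_def by simp
          then have "\<delta> * (2 * E) \<le> \<epsilon> * \<rho>" using Epos by (simp add: pos_le_divide_eq)
          then show ?thesis by (simp add: mult.commute mult.left_commute)
        qed
        finally have Beps: "\<bar>(1 + lam) * b T - \<rho>\<bar> \<le> \<epsilon> * \<rho>" .
        show "{t. t \<ge> 0 \<and> r t \<ge> \<rho>} \<noteq> {} \<and>
        (\<forall>t\<in>{0..T}.
           r t \<le> \<rho> \<and>
           a 0 * exp (24 * (1 - \<rho>) * t) \<le> a t \<and> a t \<le> a 0 * exp (24 * t) \<and>
           b 0 * exp (8 * (1 + lam) * (1 - 3 * \<rho>) * t) \<le> b t \<and> b t \<le> b 0 * exp (8 * (1 + lam) * t) \<and>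
           c 0 * exp ((8 * (1 - \<rho>) - 16 * \<rho> / (real d - 2)) * t) \<le> c t \<and> c t \<le> c 0 * exp (8 * t)) \<and>
        T \<le> M * L / lam \<and>
        \<bar>a T\<bar> \<le> M * \<rho>0 / real d \<and>
        \<bar>(real d - 2) * c T\<bar> \<le> M * \<rho>0 \<and>
        (1 + lam) * b T = \<rho> - a T - (real d - 2) * c T \<and>
        \<bar>(1 + lam) * b T - \<rho>\<bar> \<le> \<epsilon> * \<rho>"
          using Sne bnds Tb aM CM BE Beps by blast
      qed
    qed
  qed
qed

end
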